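(* In the ring of symmetric functions (power series in $p_1,p_2,\dots$ over $\mathbb{Q}$), $$p_1\,\partial_{p_1}\Sigma\operatorname{PreLie}+\partial_{p_1}\bigl(\operatorname{Comm}\circ\Sigma\operatorname{PreLie}\bigr)=1.$$
   Context: Symmetric functions are written as (formal power series) in the power sums $p_1,p_2,\dots$ over $\mathbb{Q}$, and $\partial_{p_1}$ is the partial derivative with respect to $p_1$. $\circ$ denotes plethysm: $p_k\circ f$ is obtained from $f$ by replacing every $p_j$ by $p_{jk}$ (rational constants are fixed), and $g\circ f$ is obtained by substituting $p_k\circ f$ for $p_k$ in $g$. The suspension of $f=f(p_1,p_2,\dots)$ is $\Sigma f=-f(-p_1,-p_2,-p_3,\dots)$. $\operatorname{Comm}=\exp\bigl(\sum_{k\ge1}p_k/k\bigr)-1$. $\operatorname{PreLie}$ is the Frobenius characteristic $\sum_{n\ge1}\operatorname{ch}(\mathbb{Q}\mathcal{R}_n)$ of the permutation representations of the symmetric groups $\mathfrak{S}_n$ on the sets $\mathcal{R}_n$ of rooted trees with vertex set $\{1,\dots,n\}$; equivalently, it is the unique symmetric function without constant term satisfying $\operatorname{PreLie}=p_1\,(1+\operatorname{Comm}\circ\operatorname{PreLie})$. *)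

theory Defs
  imports Complex_Main "HOL-Library.Poly_Mapping"
begin

(* Symmetric functions over Q as formal power series in the power sums p_1, p_2, ...
   A monomial is a finitely supported exponent vector m :: nat =>0 nat, where
   Poly_Mapping.lookup m i is the exponent of p_(i+1)  (so key 0 is p_1, key 1 is p_2, ...). *)

type_synonym mono = "nat \<Rightarrow>\<^sub>0 nat"
type_synonym sf = "mono \<Rightarrow> rat"

definition sf_const :: "rat \<Rightarrow> sf" where
  "sf_const c = (\<lambda>m. if m = 0 then c else 0)"

definition sf_one :: sf where
  "sf_one = sf_const 1"

definition sf_add :: "sf \<Rightarrow> sf \<Rightarrow> sf" where
  "sf_add f g = (\<lambda>m. f m + g m)"

definition sf_diff :: "sf \<Rightarrow> sf \<Rightarrow> sf" where
  "sf_diff f g = (\<lambda>m. f m - g m)"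

definition sf_smul :: "rat \<Rightarrow> sf \<Rightarrow> sf" where
  "sf_smul c f = (\<lambda>m. c * f m)"

definition sf_mult :: "sf \<Rightarrow> sf \<Rightarrow> sf" where
  "sf_mult f g = (\<lambda>m. \<Sum>(a, b) \<in> {(a, b). a + b = m}. f a * g b)"

primrec sf_pow :: "nat \<Rightarrow> sf \<Rightarrow> sf" where
  "sf_pow 0 f = sf_one"
| "sf_pow (Suc n) f = sf_mult f (sf_pow n f)"

(* the power sum p_k, for k >= 1 *)
definition sf_p :: "nat \<Rightarrow> sf" where
  "sf_p k = (\<lambda>m. if m = Poly_Mapping.single (k - 1) 1 then 1 else 0)"

(* sum of a formally summable family (coefficientwise only finitely many nonzero terms) *)
definition sf_sum_family :: "('i \<Rightarrow> sf) \<Rightarrow> sf" where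
  "sf_sum_family F = (\<lambda>m. \<Sum>i \<in> {i. F i m \<noteq> 0}. F i m)"

definition sf_dp1 :: "sf \<Rightarrow> sf" where
  "sf_dp1 f = (\<lambda>m. of_nat (Poly_Mapping.lookup m 0 + 1) * f (m + Poly_Mapping.single 0 1))"

definition mono_count :: "mono \<Rightarrow> nat" where
  "mono_count m = sum (Poly_Mapping.lookup m) (Poly_Mapping.keys m)"

(* suspension: Sigma f = - f(-p_1, -p_2, ...) *)
definition sf_susp :: "sf \<Rightarrow> sf" where
  "sf_susp f = (\<lambda>m. - ((-1) ^ mono_count m * f m))"

(* p_k o f (k >= 1): replace every p_j by p_(j k) *)
definition sf_pk_pleth :: "nat \<Rightarrow> sf \<Rightarrow> sf" where
  "sf_pk_pleth k f = (\<lambda>m. sum f {a. \<forall>i. Poly_Mapping.lookup m i =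
      (if k dvd Suc i then Poly_Mapping.lookup a (Suc i div k - 1) else 0)})"

(* substitute h i for p_(i+1) in the monomial mu *)
definition sf_subst_mono :: "(nat \<Rightarrow> sf) \<Rightarrow> mono \<Rightarrow> sf" where
  "sf_subst_mono h \<mu> = foldr (\<lambda>i acc. sf_mult (sf_pow (Poly_Mapping.lookup \<mu> i) (h i)) acc)
      (sorted_list_of_set (Poly_Mapping.keys \<mu>)) sf_one"

(* plethysm g o f: substitute p_k o f for p_k in g *)
definition sf_pleth :: "sf \<Rightarrow> sf \<Rightarrow> sf" where
  "sf_pleth g f = sf_sum_family (\<lambda>\<mu>. sf_smul (g \<mu>) (sf_subst_mono (\<lambda>i. sf_pk_pleth (Suc i) f) \<mu>))"

definition sf_exp :: "sf \<Rightarrow> sf" where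
  "sf_exp h = sf_sum_family (\<lambda>n. sf_smul (1 / fact n) (sf_pow n h))"

definition Comm :: sf where
  "Comm = sf_diff (sf_exp (sf_sum_family (\<lambda>k. sf_smul (1 / of_nat (Suc k)) (sf_p (Suc k))))) sf_one"

definition PreLie :: sf where
  "PreLie = (THE f. f 0 = 0 \<and> f = sf_mult (sf_p 1) (sf_add sf_one (sf_pleth Comm f)))"

end

theory Submission
  imports Defs "HOL-Library.FuncSet"
begin


definition Pm :: "mono \<Rightarrow> (mono \<times> mono) set" where
  "Pm m = {(a, b). a + b = m}"

definition wdeg :: "mono \<Rightarrow> nat" where
  "wdeg m = (\<Sum>i\<in>Poly_Mapping.keys m. Suc i * Poly_Mapping.lookup m i)"

lemma wdeg_superset:
  assumes "finite S" "Poly_Mapping.keys m \<subseteq> S"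
  shows "wdeg m = (\<Sum>i\<in>S. Suc i * Poly_Mapping.lookup m i)"
  unfolding wdeg_def using assms
  by (intro sum.mono_neutral_left) (auto simp: in_keys_iff)

lemma count_superset:
  assumes "finite S" "Poly_Mapping.keys m \<subseteq> S"
  shows "mono_count m = (\<Sum>i\<in>S. Poly_Mapping.lookup m i)"
  unfolding mono_count_def using assms
  by (intro sum.mono_neutral_left) (auto simp: in_keys_iff)

lemma wdeg_add: "wdeg (a + b) = wdeg a + wdeg b"
proof -
  let ?S = "Poly_Mapping.keys a \<union> Poly_Mapping.keys b"
  have "wdeg (a + b) = (\<Sum>i\<in>?S. Suc i * Poly_Mapping.lookup (a+b) i)"
    by (rule wdeg_superset) (auto dest: keys_add[THEN subsetD])
  also have "\<dots> = (\<Sum>i\<in>?S. Suc i * Poly_Mapping.lookup a i) + (\<Sum>i\<in>?S. Suc i * Poly_Mapping.lookup b i)"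
    by (simp only: lookup_add sum.distrib[symmetric] add_mult_distrib2)
  also have "\<dots> = wdeg a + wdeg b"
    using wdeg_superset[of ?S a] wdeg_superset[of ?S b] by simp
  finally show ?thesis .
qed

lemma count_add: "mono_count (a + b) = mono_count a + mono_count b"
proof -
  let ?S = "Poly_Mapping.keys a \<union> Poly_Mapping.keys b"
  have "mono_count (a + b) = (\<Sum>i\<in>?S. Poly_Mapping.lookup (a+b) i)"
    by (rule count_superset) (auto dest: keys_add[THEN subsetD])
  also have "\<dots> = (\<Sum>i\<in>?S. Poly_Mapping.lookup a i) + (\<Sum>i\<in>?S. Poly_Mapping.lookup b i)"
    by (simp add: lookup_add sum.distrib)
  also have "\<dots> = mono_count a + mono_count b"
    using count_superset[of ?S a] count_superset[of ?S b] by simp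
  finally show ?thesis .
qed

lemma wdeg_zero [simp]: "wdeg 0 = 0"
  by (simp add: wdeg_def)

lemma count_zero [simp]: "mono_count 0 = 0"
  by (simp add: mono_count_def)

lemma wdeg_single [simp]: "wdeg (Poly_Mapping.single k n) = Suc k * n"
  by (simp add: wdeg_def)

lemma count_single [simp]: "mono_count (Poly_Mapping.single k n) = n"
  by (simp add: mono_count_def)

lemma key_le_wdeg:
  assumes "i \<in> Poly_Mapping.keys m"
  shows "Suc i \<le> wdeg m" "Poly_Mapping.lookup m i \<le> wdeg m"
proof -
  have le: "Suc i * Poly_Mapping.lookup m i \<le> wdeg m"
    unfolding wdeg_def using assms by (intro member_le_sum) auto
  have "Poly_Mapping.lookup m i \<ge> 1" using assms by (simp add: in_keys_iff)
  then show "Suc i \<le> wdeg m" "Poly_Mapping.lookup m i \<le> wdeg m"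
    using le by (metis dual_order.trans mult.right_neutral mult_le_mono2,
                 metis dual_order.trans le_add1 mult_Suc)
qed

lemma wdeg_eq_0_iff [simp]: "wdeg m = 0 \<longleftrightarrow> m = 0"
proof
  assume "wdeg m = 0"
  then have "Poly_Mapping.keys m = {}"
    using key_le_wdeg(1) by fastforce
  then show "m = 0" by simp
qed simp

lemma finite_bounded:
  assumes "finite K"
  shows "finite {m::mono. Poly_Mapping.keys m \<subseteq> K \<and> (\<forall>i. Poly_Mapping.lookup m i \<le> B)}"
    (is "finite ?A")
proof -
  have inj: "inj_on (\<lambda>m. restrict (Poly_Mapping.lookup m) K) ?A"
  proof (rule inj_onI)
    fix x y assume x: "x \<in> ?A" and y: "y \<in> ?A"
      and eq: "restrict (Poly_Mapping.lookup x) K = restrict (Poly_Mapping.lookup y) K"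
    show "x = y"
    proof (rule poly_mapping_eqI)
      fix i show "Poly_Mapping.lookup x i = Poly_Mapping.lookup y i"
      proof (cases "i \<in> K")
        case True then show ?thesis using fun_cong[OF eq, of i] by simp
      next
        case False then show ?thesis using x y by (metis (mono_tags, lifting) in_keys_iff mem_Collect_eq subsetD)
      qed
    qed
  qed
  have "(\<lambda>m. restrict (Poly_Mapping.lookup m) K) ` ?A \<subseteq> PiE K (\<lambda>_. {..B})"
    by auto
  moreover have "finite (PiE K (\<lambda>_. {..B}))"
    using assms by (intro finite_PiE) auto
  ultimately show ?thesis
    using inj by (meson finite_imageD finite_subset)
qed

definition Mset :: "nat \<Rightarrow> mono set" where
  "Mset N = {m. wdeg m \<le> N}"

lemma finite_Mset [simp]: "finite (Mset N)"
proof -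
  have "Mset N \<subseteq> {m::mono. Poly_Mapping.keys m \<subseteq> {..<N} \<and> (\<forall>i. Poly_Mapping.lookup m i \<le> N)}"
  proof (rule subsetI, rule CollectI, rule conjI)
    fix m assume "m \<in> Mset N"
    then have w: "wdeg m \<le> N" by (simp add: Mset_def)
    show "Poly_Mapping.keys m \<subseteq> {..<N}" using key_le_wdeg(1)[of _ m] w by fastforce
    show "\<forall>i. Poly_Mapping.lookup m i \<le> N"
    proof
      fix i show "Poly_Mapping.lookup m i \<le> N"
      using key_le_wdeg(2)[of i m] w by (cases "i \<in> Poly_Mapping.keys m") (auto simp: in_keys_iff)
    qed
  qed
  then show ?thesis using finite_bounded[of "{..<N}" N] finite_subset by blast
qed

lemma Pm_subset: "Pm m \<subseteq> Mset (wdeg m) \<times> Mset (wdeg m)"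
  by (auto simp: Pm_def Mset_def wdeg_add)

lemma finite_Pm [simp]: "finite (Pm m)"
  using Pm_subset finite_subset by (metis finite_Mset finite_SigmaI)

lemma sf_mult_Pm: "sf_mult f g m = (\<Sum>(a, b)\<in>Pm m. f a * g b)"
  by (simp add: sf_mult_def Pm_def)

lemma sf_mult_comm: "sf_mult f g = sf_mult g f"
proof
  fix m
  show "sf_mult f g m = sf_mult g f m"
    unfolding sf_mult_Pm
    by (rule sum.reindex_bij_witness[of _ "\<lambda>(a,b). (b,a)" "\<lambda>(a,b). (b,a)"])
       (auto simp: Pm_def add.commute mult.commute)
qed

lemma sf_mult_assoc: "sf_mult (sf_mult f g) h = sf_mult f (sf_mult g h)"
proof
  fix m
  have "sf_mult (sf_mult f g) h m = (\<Sum>(x, c)\<in>Pm m. \<Sum>(a, b)\<in>Pm x. f a * g b * h c)"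
    unfolding sf_mult_Pm by (simp add: sum_distrib_right case_prod_beta)
  also have "\<dots> = (\<Sum>xc\<in>Pm m. \<Sum>ab\<in>Pm (fst xc). f (fst ab) * g (snd ab) * h (snd xc))"
    by (simp add: case_prod_beta)
  also have "\<dots> = (\<Sum>z\<in>Sigma (Pm m) (\<lambda>xc. Pm (fst xc)). f (fst (snd z)) * g (snd (snd z)) * h (snd (fst z)))"
    by (subst sum.Sigma) (auto simp: case_prod_beta)
  also have "\<dots> = (\<Sum>z\<in>Sigma (Pm m) (\<lambda>ay. Pm (snd ay)). f (fst (fst z)) * g (fst (snd z)) * h (snd (snd z)))"
    by (rule sum.reindex_bij_witness[of _ "\<lambda>((a,y),(b,c)). ((a+b,c),(a,b))" "\<lambda>((x,c),(a,b)). ((a,b+c),(b,c))"])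
       (auto simp: Pm_def add.assoc)
  also have "\<dots> = (\<Sum>ay\<in>Pm m. \<Sum>bc\<in>Pm (snd ay). f (fst ay) * g (fst bc) * h (snd bc))"
    by (subst sum.Sigma) (auto simp: case_prod_beta)
  also have "\<dots> = (\<Sum>(a, y)\<in>Pm m. \<Sum>(b, c)\<in>Pm y. f a * g b * h c)"
    by (simp add: case_prod_beta)
  also have "\<dots> = sf_mult f (sf_mult g h) m"
    unfolding sf_mult_Pm by (simp add: sum_distrib_left case_prod_beta mult.assoc)
  finally show "sf_mult (sf_mult f g) h m = sf_mult f (sf_mult g h) m" .
qed

lemma sf_mult_one: "sf_mult sf_one g = g"
proof
  fix m
  have "sf_mult sf_one g m = (\<Sum>x\<in>Pm m. if x = (0, m) then g m else 0)"
    unfolding sf_mult_Pm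
    by (rule sum.cong) (auto simp: sf_one_def sf_const_def Pm_def split: if_splits)
  also have "\<dots> = g m" by (subst sum.delta) (auto simp: Pm_def simp del: finite_Pm intro: finite_Pm[unfolded Pm_def])
  finally show "sf_mult sf_one g m = g m" .
qed

lemma sf_mult_distrib: "sf_mult (sf_add f g) h = sf_add (sf_mult f h) (sf_mult g h)"
  unfolding sf_mult_Pm sf_add_def by (simp add: fun_eq_iff distrib_right sum.distrib case_prod_beta)

typedef ps = "UNIV :: sf set" morphisms coeff Abs_ps by simp

setup_lifting type_definition_ps

lemma ps_eqI: "(\<And>m. coeff f m = coeff g m) \<Longrightarrow> f = g"
  by (metis coeff_inverse ext)

instantiation ps :: comm_ring_1
begin
lift_definition zero_ps :: ps is "\<lambda>_. 0" .
lift_definition one_ps :: ps is sf_one .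
lift_definition plus_ps :: "ps \<Rightarrow> ps \<Rightarrow> ps" is sf_add .
lift_definition minus_ps :: "ps \<Rightarrow> ps \<Rightarrow> ps" is sf_diff .
lift_definition uminus_ps :: "ps \<Rightarrow> ps" is "\<lambda>f m. - f m" .
lift_definition times_ps :: "ps \<Rightarrow> ps \<Rightarrow> ps" is sf_mult .
instance
proof
  fix a b c :: ps
  show "a * b * c = a * (b * c)" by transfer (rule sf_mult_assoc)
  show "a * b = b * a" by transfer (rule sf_mult_comm)
  show "1 * a = a" by transfer (rule sf_mult_one)
  show "(a + b) * c = a * c + b * c" by transfer (rule sf_mult_distrib)
  show "a + b + c = a + (b + c)" by transfer (simp add: sf_add_def add.assoc)
  show "a + b = b + a" by transfer (simp add: sf_add_def add.commute)
  show "0 + a = a" by transfer (simp add: sf_add_def)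
  show "- a + a = 0" by transfer (simp add: sf_add_def)
  show "a - b = a + - b" by transfer (simp add: sf_add_def sf_diff_def)
  show "(0::ps) \<noteq> 1" by transfer (simp add: sf_one_def sf_const_def fun_eq_iff)
qed
end

lemma coeff_add [simp]: "coeff (f + g) m = coeff f m + coeff g m"
  by transfer (simp add: sf_add_def)
lemma coeff_diff [simp]: "coeff (f - g) m = coeff f m - coeff g m"
  by transfer (simp add: sf_diff_def)
lemma coeff_uminus [simp]: "coeff (- f) m = - coeff f m"
  by transfer simp
lemma coeff_zero [simp]: "coeff 0 m = 0"
  by transfer simp
lemma coeff_one: "coeff 1 m = (if m = 0 then 1 else 0)"
  by transfer (simp add: sf_one_def sf_const_def)
lemma coeff_mult: "coeff (f * g) m = (\<Sum>(a, b)\<in>Pm m. coeff f a * coeff g b)"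
  by transfer (simp add: sf_mult_Pm)
lemma coeff_sum: "coeff (sum F S) m = (\<Sum>i\<in>S. coeff (F i) m)"
  by (induction S rule: infinite_finite_induct) auto

lemma coeff_power: "coeff (f ^ n) = sf_pow n (coeff f)"
  by (induction n) (simp_all add: one_ps.rep_eq times_ps.rep_eq)

lemma coeff_Abs [simp]: "coeff (Abs_ps f) = f"
  by (simp add: Abs_ps_inverse)

lemma Pm_swap: "(\<Sum>(a, b)\<in>Pm m. \<phi> a b) = (\<Sum>(a, b)\<in>Pm m. \<phi> b a)"
  by (rule sum.reindex_bij_witness[of _ "\<lambda>(a,b). (b,a)" "\<lambda>(a,b). (b,a)"])
     (auto simp: Pm_def add.commute)

section \<open>Order and truncated equality\<close>

definition ordge :: "nat \<Rightarrow> ps \<Rightarrow> bool" where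
  "ordge d f \<longleftrightarrow> (\<forall>m. coeff f m \<noteq> 0 \<longrightarrow> d \<le> wdeg m)"

lemma ordgeD: "ordge d f \<Longrightarrow> wdeg m < d \<Longrightarrow> coeff f m = 0"
  unfolding ordge_def by force

lemma ordge_0 [simp]: "ordge 0 f"
  by (simp add: ordge_def)

lemma ordge_zero [simp]: "ordge d 0"
  by (simp add: ordge_def)

lemma ordge_mono: "ordge d f \<Longrightarrow> d' \<le> d \<Longrightarrow> ordge d' f"
  unfolding ordge_def by force

lemma ordge_add: "ordge d f \<Longrightarrow> ordge d g \<Longrightarrow> ordge d (f + g)"
  unfolding ordge_def by force

lemma ordge_uminus: "ordge d f \<Longrightarrow> ordge d (- f)"
  unfolding ordge_def by force

lemma ordge_uminus_iff [simp]: "ordge d (- f) = ordge d f"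
  unfolding ordge_def by force

lemma ordge_diff: "ordge d f \<Longrightarrow> ordge d g \<Longrightarrow> ordge d (f - g)"
  unfolding ordge_def by force

lemma ordge_sum: "(\<And>i. i \<in> S \<Longrightarrow> ordge d (F i)) \<Longrightarrow> ordge d (sum F S)"
  by (induction S rule: infinite_finite_induct) (auto intro: ordge_add)

lemma ordge_mult: "ordge a f \<Longrightarrow> ordge b g \<Longrightarrow> ordge (a + b) (f * g)"
proof -
  assume f: "ordge a f" and g: "ordge b g"
  show "ordge (a + b) (f * g)"
    unfolding ordge_def
  proof (intro allI impI)
    fix m assume "coeff (f * g) m \<noteq> 0"
    then obtain x where x: "x \<in> Pm m" "(case x of (u, v) \<Rightarrow> coeff f u * coeff g v) \<noteq> 0"
      unfolding coeff_mult by (meson sum.not_neutral_contains_not_neutral)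
    obtain u v where "x = (u, v)" by force
    with x have "u + v = m" "coeff f u \<noteq> 0" "coeff g v \<noteq> 0" by (auto simp: Pm_def)
    then show "a + b \<le> wdeg m" using f g unfolding ordge_def
      by (metis add_le_mono wdeg_add)
  qed
qed

lemma ordge_mult_left: "ordge a f \<Longrightarrow> ordge a (f * g)"
  using ordge_mult[of a f 0 g] by simp

lemma ordge_mult_right: "ordge a g \<Longrightarrow> ordge a (f * g)"
  using ordge_mult[of 0 f a g] by simp

lemma ordge_power: "ordge a f \<Longrightarrow> ordge (n * a) (f ^ n)"
  by (induction n) (auto intro: ordge_mult)

definition eqN :: "nat \<Rightarrow> ps \<Rightarrow> ps \<Rightarrow> bool" where
  "eqN N f g \<longleftrightarrow> ordge (Suc N) (f - g)"

lemma eqN_iff: "eqN N f g \<longleftrightarrow> (\<forall>m. wdeg m \<le> N \<longrightarrow> coeff f m = coeff g m)"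
  unfolding eqN_def ordge_def by force

lemma eqN_refl [simp]: "eqN N f f"
  by (simp add: eqN_iff)

lemma eqN_sym: "eqN N f g \<Longrightarrow> eqN N g f"
  by (simp add: eqN_iff)

lemma eqN_trans [trans]: "eqN N f g \<Longrightarrow> eqN N g h \<Longrightarrow> eqN N f h"
  by (simp add: eqN_iff)

lemma eq_eqN_trans [trans]: "f = g \<Longrightarrow> eqN N g h \<Longrightarrow> eqN N f h"
  by simp

lemma eqN_eq_trans [trans]: "eqN N f g \<Longrightarrow> g = h \<Longrightarrow> eqN N f h"
  by simp

lemma eqN_mono: "eqN N f g \<Longrightarrow> M \<le> N \<Longrightarrow> eqN M f g"
  by (simp add: eqN_iff)

lemma eqN_add: "eqN N f f' \<Longrightarrow> eqN N g g' \<Longrightarrow> eqN N (f + g) (f' + g')"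
  by (simp add: eqN_iff)

lemma eqN_diff: "eqN N f f' \<Longrightarrow> eqN N g g' \<Longrightarrow> eqN N (f - g) (f' - g')"
  by (simp add: eqN_iff)

lemma eqN_uminus: "eqN N f f' \<Longrightarrow> eqN N (- f) (- f')"
  by (simp add: eqN_iff)

lemma eqN_mult: "eqN N f f' \<Longrightarrow> eqN N g g' \<Longrightarrow> eqN N (f * g) (f' * g')"
proof -
  assume "eqN N f f'" "eqN N g g'"
  then have "ordge (Suc N) ((f - f') * g)" "ordge (Suc N) (f' * (g - g'))"
    unfolding eqN_def by (auto intro: ordge_mult_left ordge_mult_right)
  then have "ordge (Suc N) ((f - f') * g + f' * (g - g'))" by (rule ordge_add)
  moreover have "(f - f') * g + f' * (g - g') = f * g - f' * g'"
    by (simp add: algebra_simps)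
  ultimately show ?thesis by (simp add: eqN_def)
qed

lemma eqN_sum: "(\<And>i. i \<in> S \<Longrightarrow> eqN N (F i) (G i)) \<Longrightarrow> eqN N (sum F S) (sum G S)"
  by (induction S rule: infinite_finite_induct) (auto intro: eqN_add)

lemma eqN_prod: "(\<And>i. i \<in> S \<Longrightarrow> eqN N (F i) (G i)) \<Longrightarrow> eqN N (prod F S) (prod G S)"
  by (induction S rule: infinite_finite_induct) (auto intro: eqN_mult)

lemma eqN_power: "eqN N f g \<Longrightarrow> eqN N (f ^ n) (g ^ n)"
  by (induction n) (auto intro: eqN_mult)

lemma eqN_ordge: "ordge (Suc N) f \<Longrightarrow> eqN N f 0"
  by (simp add: eqN_def)

lemma eqN_all: "(\<And>N. eqN N f g) \<Longrightarrow> f = g"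
  by (rule ps_eqI) (auto simp: eqN_iff)

lift_definition sc :: "rat \<Rightarrow> ps" is sf_const .

lemma coeff_sc: "coeff (sc c) m = (if m = 0 then c else 0)"
  by transfer (simp add: sf_const_def)

lemma coeff_sc_mult [simp]: "coeff (sc c * f) m = c * coeff f m"
proof -
  have "coeff (sc c * f) m = (\<Sum>x\<in>Pm m. if x = (0, m) then c * coeff f m else 0)"
    unfolding coeff_mult
    by (rule sum.cong) (auto simp: coeff_sc Pm_def split: if_splits)
  also have "\<dots> = c * coeff f m" by (subst sum.delta) (auto simp: Pm_def simp del: finite_Pm intro: finite_Pm[unfolded Pm_def])
  finally show ?thesis .
qed

lemma sc_one [simp]: "sc 1 = 1"
  by transfer (simp add: sf_one_def)

lemma sc_zero [simp]: "sc 0 = 0"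
  by (rule ps_eqI) (simp add: coeff_sc)

lemma sc_add: "sc (a + b) = sc a + sc b"
  by (rule ps_eqI) (simp add: coeff_sc)

lemma sc_mult: "sc (a * b) = sc a * sc b"
  by (rule ps_eqI) (simp add: coeff_sc)

lemma sc_uminus: "sc (- a) = - sc a"
  by (rule ps_eqI) (simp add: coeff_sc)

lemma sc_of_nat: "sc (of_nat n) = of_nat n"
  by (induction n) (simp_all add: sc_add)

lemma ordge_sc_mult: "ordge d f \<Longrightarrow> ordge d (sc c * f)"
  by (simp add: ordge_def)

lift_definition X :: ps is "sf_p 1" .

lemma coeff_X: "coeff X m = (if m = Poly_Mapping.single 0 1 then 1 else 0)"
  by transfer (simp add: sf_p_def)

lemma ordge_X: "ordge 1 X"
  by (auto simp: ordge_def coeff_X)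

definition psum :: "('i \<Rightarrow> ps) \<Rightarrow> ps" where
  "psum F = Abs_ps (sf_sum_family (\<lambda>i. coeff (F i)))"

lemma psum_eqN:
  assumes fin: "finite {i. w i \<le> N}" and ord: "\<And>i. ordge (w i) (F i)"
  shows "eqN N (psum F) (sum F {i. w i \<le> N})"
  unfolding eqN_iff
proof (intro allI impI)
  fix m assume m: "wdeg m \<le> N"
  have sub: "{i. coeff (F i) m \<noteq> 0} \<subseteq> {i. w i \<le> N}"
    using ord m unfolding ordge_def by (force intro: order_trans)
  have "coeff (psum F) m = (\<Sum>i\<in>{i. coeff (F i) m \<noteq> 0}. coeff (F i) m)"
    by (simp add: psum_def sf_sum_family_def)
  also have "\<dots> = (\<Sum>i\<in>{i. w i \<le> N}. coeff (F i) m)"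
    using sub fin by (intro sum.mono_neutral_left) auto
  also have "\<dots> = coeff (sum F {i. w i \<le> N}) m"
    by (simp add: coeff_sum)
  finally show "coeff (psum F) m = coeff (sum F {i. w i \<le> N}) m" .
qed

abbreviation e1 :: "nat \<Rightarrow> mono" where
  "e1 j \<equiv> Poly_Mapping.single j 1"

lift_definition Dj :: "nat \<Rightarrow> ps \<Rightarrow> ps" is
  "\<lambda>j f m. of_nat (Poly_Mapping.lookup m j + 1) * f (m + e1 j)" .

lemma coeff_Dj: "coeff (Dj j f) m = of_nat (Poly_Mapping.lookup m j + 1) * coeff f (m + e1 j)"
  by transfer simp

lemma Dj_add [simp]: "Dj j (f + g) = Dj j f + Dj j g"
  by (rule ps_eqI) (simp add: coeff_Dj algebra_simps)

lemma Dj_diff [simp]: "Dj j (f - g) = Dj j f - Dj j g"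
  by (rule ps_eqI) (simp add: coeff_Dj algebra_simps)

lemma Dj_uminus [simp]: "Dj j (- f) = - Dj j f"
  by (rule ps_eqI) (simp add: coeff_Dj algebra_simps)

lemma Dj_sum: "Dj j (sum F S) = (\<Sum>i\<in>S. Dj j (F i))"
  by (induction S rule: infinite_finite_induct) (auto simp: coeff_Dj intro!: ps_eqI)

lemma add_e1_neq0 [simp]: "m + e1 j \<noteq> 0"
proof
  assume "m + e1 j = 0"
  then have "Poly_Mapping.lookup (m + e1 j) j = 0" by simp
  then show False by (simp add: lookup_add)
qed

lemma add_e1_neq0' [simp]: "(m::mono) + Poly_Mapping.single j (Suc 0) \<noteq> 0"
  using add_e1_neq0[of m j] by simp

lemma Dj_sc [simp]: "Dj j (sc c) = 0"
  by (rule ps_eqI) (simp add: coeff_Dj coeff_sc)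

lemma Dj_one [simp]: "Dj j 1 = 0"
  using Dj_sc[of j 1] by simp

lemma Dj_zero [simp]: "Dj j 0 = 0"
  using Dj_sc[of j 0] by simp

lemma Dj_X: "Dj 0 X = 1"
  by (rule ps_eqI) (auto simp: coeff_Dj coeff_X coeff_one)

lemma Dj_eqN: "eqN (N + Suc j) f g \<Longrightarrow> eqN N (Dj j f) (Dj j g)"
  by (auto simp: eqN_iff coeff_Dj wdeg_add)

lemma sub_e_eq:
  assumes "a + b = m + e1 j" "Poly_Mapping.lookup a j \<noteq> 0"
  shows "a - e1 j + b = m" "a - e1 j + e1 j = a"
proof -
  show *: "a - e1 j + e1 j = a"
    using assms(2) by (intro poly_mapping_eqI) (auto simp: lookup_add lookup_minus lookup_single when_def)
  have "a - e1 j + b + e1 j = m + e1 j"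
    using assms(1) * by (metis add.commute add.left_commute)
  then show "a - e1 j + b = m" by simp
qed

lemma Pm_shift:
  "(\<Sum>(a, b)\<in>Pm (m + e1 j). of_nat (Poly_Mapping.lookup a j) * (\<phi> a b :: rat))
   = (\<Sum>(a, b)\<in>Pm m. of_nat (Poly_Mapping.lookup a j + 1) * \<phi> (a + e1 j) b)"
  (is "?L = ?R")
proof -
  let ?T = "{(a, b) \<in> Pm (m + e1 j). Poly_Mapping.lookup a j \<noteq> 0}"
  have "?L = (\<Sum>(a, b)\<in>?T. of_nat (Poly_Mapping.lookup a j) * \<phi> a b)"
    by (rule sum.mono_neutral_right) auto
  also have "\<dots> = ?R"
  proof (rule sum.reindex_bij_witness[of _ "\<lambda>(a,b). (a + e1 j, b)" "\<lambda>(a,b). (a - e1 j, b)"])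
    fix x assume "x \<in> ?T"
    then obtain a b where x: "x = (a, b)" "a + b = m + e1 j" "Poly_Mapping.lookup a j \<noteq> 0"
      by (auto simp: Pm_def)
    note s = sub_e_eq[OF x(2,3)]
    show "(case (case x of (a, b) \<Rightarrow> (a - e1 j, b)) of (a, b) \<Rightarrow> (a + e1 j, b)) = x"
      using x s by simp
    show "(case x of (a, b) \<Rightarrow> (a - e1 j, b)) \<in> Pm m"
      using x s by (simp add: Pm_def)
    have lk: "Poly_Mapping.lookup (a - e1 j) j + 1 = Poly_Mapping.lookup a j"
      using x(3) by (simp add: lookup_minus)
    show "(case (case x of (a, b) \<Rightarrow> (a - e1 j, b)) of (a, b) \<Rightarrow>
          of_nat (Poly_Mapping.lookup a j + 1) * \<phi> (a + e1 j) b) =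
          (case x of (a, b) \<Rightarrow> of_nat (Poly_Mapping.lookup a j) * \<phi> a b)"
      using x s arg_cong[OF lk, of "of_nat :: nat \<Rightarrow> rat"] by simp
  next
    fix y assume "y \<in> Pm m"
    then obtain a b where y: "y = (a, b)" "a + b = m" by (auto simp: Pm_def)
    show "(case (case y of (a, b) \<Rightarrow> (a + e1 j, b)) of (a, b) \<Rightarrow> (a - e1 j, b)) = y"
      using y by simp
    have "a + e1 j + b = m + e1 j" using y by (metis add.commute add.left_commute)
    then show "(case y of (a, b) \<Rightarrow> (a + e1 j, b)) \<in> ?T"
      using y by (simp add: Pm_def lookup_add)
  qed
  finally show ?thesis .
qed

lemma Dj_mult: "Dj j (f * g) = Dj j f * g + f * Dj j g"
proof (rule ps_eqI)
  fix m
  have "coeff (Dj j (f * g)) m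
      = (\<Sum>(a, b)\<in>Pm (m + e1 j). of_nat (Poly_Mapping.lookup a j + Poly_Mapping.lookup b j) * (coeff f a * coeff g b))"
    unfolding coeff_Dj coeff_mult sum_distrib_left
    by (rule sum.cong) (auto simp: Pm_def lookup_add dest!: arg_cong[where f="\<lambda>x. Poly_Mapping.lookup x j"])
  also have "\<dots> = (\<Sum>(a, b)\<in>Pm (m + e1 j). of_nat (Poly_Mapping.lookup a j) * (coeff f a * coeff g b))
      + (\<Sum>(a, b)\<in>Pm (m + e1 j). of_nat (Poly_Mapping.lookup b j) * (coeff g b * coeff f a))"
    by (simp add: sum.distrib[symmetric] case_prod_beta algebra_simps)
  also have "(\<Sum>(a, b)\<in>Pm (m + e1 j). of_nat (Poly_Mapping.lookup b j) * (coeff g b * coeff f a))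
      = (\<Sum>(a, b)\<in>Pm (m + e1 j). of_nat (Poly_Mapping.lookup a j) * (coeff g a * coeff f b))"
    by (rule Pm_swap)
  also have "(\<Sum>(a, b)\<in>Pm (m + e1 j). of_nat (Poly_Mapping.lookup a j) * (coeff f a * coeff g b))
      = coeff (Dj j f * g) m"
    unfolding Pm_shift coeff_mult coeff_Dj by (simp add: mult.assoc)
  also have "(\<Sum>(a, b)\<in>Pm (m + e1 j). of_nat (Poly_Mapping.lookup a j) * (coeff g a * coeff f b))
      = coeff (Dj j g * f) m"
    unfolding Pm_shift coeff_mult coeff_Dj by (simp add: mult.assoc)
  finally show "coeff (Dj j (f * g)) m = coeff (Dj j f * g + f * Dj j g) m"
    by (simp add: mult.commute)
qed

lemma Dj_sc_mult [simp]: "Dj j (sc c * f) = sc c * Dj j f"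
  by (simp add: Dj_mult)

lemma Dj_power: "Dj j (f ^ Suc n) = of_nat (Suc n) * f ^ n * Dj j f"
  by (induction n) (simp_all add: Dj_mult algebra_simps)

section \<open>Monomial substitution\<close>

lemma ordge_prod: "(\<And>i. i \<in> S \<Longrightarrow> ordge (d i) (F i)) \<Longrightarrow> ordge (\<Sum>i\<in>S. d i) (prod F S)"
  by (induction S rule: infinite_finite_induct) (auto intro: ordge_mult)

lemma sc_sum: "sc (sum f S) = (\<Sum>i\<in>S. sc (f i))"
  by (induction S rule: infinite_finite_induct) (auto simp: sc_add)

lemma sc_power: "sc (c ^ n) = sc c ^ n"
  by (induction n) (auto simp: sc_mult)

definition hp :: "(nat \<Rightarrow> ps) \<Rightarrow> mono \<Rightarrow> ps" where
  "hp h \<mu> = (\<Prod>i\<in>Poly_Mapping.keys \<mu>. h i ^ Poly_Mapping.lookup \<mu> i)"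

lemma hp_superset:
  assumes "finite S" "Poly_Mapping.keys \<mu> \<subseteq> S"
  shows "hp h \<mu> = (\<Prod>i\<in>S. h i ^ Poly_Mapping.lookup \<mu> i)"
  unfolding hp_def using assms
  by (intro prod.mono_neutral_left) (auto simp: in_keys_iff)

lemma hp_zero [simp]: "hp h 0 = 1"
  by (simp add: hp_def)

lemma hp_add: "hp h (a + b) = hp h a * hp h b"
proof -
  let ?S = "Poly_Mapping.keys a \<union> Poly_Mapping.keys b"
  have "hp h (a + b) = (\<Prod>i\<in>?S. h i ^ Poly_Mapping.lookup (a + b) i)"
    by (rule hp_superset) (auto dest: keys_add[THEN subsetD])
  also have "\<dots> = (\<Prod>i\<in>?S. h i ^ Poly_Mapping.lookup a i) * (\<Prod>i\<in>?S. h i ^ Poly_Mapping.lookup b i)"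
    by (simp add: lookup_add power_add prod.distrib)
  also have "\<dots> = hp h a * hp h b"
    using hp_superset[of ?S a h] hp_superset[of ?S b h] by simp
  finally show ?thesis .
qed

definition good :: "(nat \<Rightarrow> ps) \<Rightarrow> bool" where
  "good h \<longleftrightarrow> (\<forall>k. ordge (Suc k) (h k))"

lemma ordge_hp: "good h \<Longrightarrow> ordge (wdeg \<mu>) (hp h \<mu>)"
  unfolding hp_def wdeg_def good_def
  by (rule ordge_prod) (metis mult.commute ordge_power)

definition subst :: "(nat \<Rightarrow> ps) \<Rightarrow> ps \<Rightarrow> ps" where
  "subst h g = psum (\<lambda>\<mu>. sc (coeff g \<mu>) * hp h \<mu>)"

lemma Mset_eq: "{\<mu>. wdeg \<mu> \<le> N} = Mset N"
  by (simp add: Mset_def)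

lemma subst_eqN:
  assumes "good h"
  shows "eqN N (subst h g) (\<Sum>\<mu>\<in>Mset N. sc (coeff g \<mu>) * hp h \<mu>)"
  unfolding subst_def Mset_eq[symmetric]
  by (rule psum_eqN) (auto simp: Mset_eq intro: ordge_sc_mult ordge_hp assms)

lemma subst_eqN':
  assumes "good h"
  shows "eqN N (\<Sum>\<mu>\<in>Mset N. sc (coeff g \<mu>) * hp h \<mu>) (subst h g)"
  by (rule eqN_sym, rule subst_eqN[OF assms])

lemma subst_add:
  assumes "good h" shows "subst h (f + g) = subst h f + subst h g"
proof (rule eqN_all)
  fix N
  have "eqN N (subst h (f + g)) (\<Sum>\<mu>\<in>Mset N. sc (coeff (f + g) \<mu>) * hp h \<mu>)"
    by (rule subst_eqN[OF assms])
  also have "(\<Sum>\<mu>\<in>Mset N. sc (coeff (f + g) \<mu>) * hp h \<mu>)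
     = (\<Sum>\<mu>\<in>Mset N. sc (coeff f \<mu>) * hp h \<mu>) + (\<Sum>\<mu>\<in>Mset N. sc (coeff g \<mu>) * hp h \<mu>)"
    by (simp add: sc_add sum.distrib distrib_right)
  also have "eqN N \<dots> (subst h f + subst h g)"
    by (intro eqN_add subst_eqN' assms)
  finally show "eqN N (subst h (f + g)) (subst h f + subst h g)" .
qed

lemma subst_uminus:
  assumes "good h" shows "subst h (- f) = - subst h f"
proof (rule eqN_all)
  fix N
  have "eqN N (subst h (- f)) (\<Sum>\<mu>\<in>Mset N. sc (coeff (- f) \<mu>) * hp h \<mu>)"
    by (rule subst_eqN[OF assms])
  also have "(\<Sum>\<mu>\<in>Mset N. sc (coeff (- f) \<mu>) * hp h \<mu>)
     = - (\<Sum>\<mu>\<in>Mset N. sc (coeff f \<mu>) * hp h \<mu>)"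
    by (simp add: sc_uminus sum_negf)
  also have "eqN N \<dots> (- subst h f)"
    by (intro eqN_uminus subst_eqN' assms)
  finally show "eqN N (subst h (- f)) (- subst h f)" .
qed

lemma subst_diff:
  assumes "good h" shows "subst h (f - g) = subst h f - subst h g"
  using subst_add[OF assms, of f "- g"] subst_uminus[OF assms, of g] by simp

lemma subst_one:
  assumes "good h" shows "subst h 1 = 1"
proof (rule eqN_all)
  fix N
  have "eqN N (subst h 1) (\<Sum>\<mu>\<in>Mset N. sc (coeff 1 \<mu>) * hp h \<mu>)"
    by (rule subst_eqN[OF assms])
  also have "(\<Sum>\<mu>\<in>Mset N. sc (coeff 1 \<mu>) * hp h \<mu>) = (\<Sum>\<mu>\<in>Mset N. if \<mu> = 0 then 1 else 0)"
    by (rule sum.cong) (auto simp: coeff_one)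
  also have "\<dots> = 1"
    by (subst sum.delta[OF finite_Mset]) (simp add: Mset_def)
  finally show "eqN N (subst h 1) 1" .
qed

lemma sum_Pm_group:
  "(\<Sum>\<mu>\<in>Mset N. \<Sum>x\<in>Pm \<mu>. \<phi> x) = (\<Sum>x\<in>{(a, b). wdeg a + wdeg b \<le> N}. \<phi> x)"
proof -
  have "(\<Sum>\<mu>\<in>Mset N. \<Sum>x\<in>Pm \<mu>. \<phi> x) = (\<Sum>z\<in>Sigma (Mset N) Pm. \<phi> (snd z))"
    by (subst sum.Sigma) (auto simp: case_prod_beta)
  also have "\<dots> = (\<Sum>x\<in>snd ` Sigma (Mset N) Pm. \<phi> x)"
    by (rule sum.reindex[symmetric, unfolded comp_def]) (auto simp: inj_on_def Pm_def)
  also have "snd ` Sigma (Mset N) Pm = {(a, b). wdeg a + wdeg b \<le> N}"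
  proof (rule set_eqI)
    fix x :: "mono \<times> mono"
    obtain a b where x: "x = (a, b)" by force
    have "x \<in> snd ` Sigma (Mset N) Pm \<longleftrightarrow> (a + b, x) \<in> Sigma (Mset N) Pm"
      by (force simp: x Pm_def)
    then show "x \<in> snd ` Sigma (Mset N) Pm \<longleftrightarrow> x \<in> {(a, b). wdeg a + wdeg b \<le> N}"
      by (simp add: x Pm_def Mset_def wdeg_add)
  qed
  finally show ?thesis .
qed

lemma subst_mult:
  assumes h: "good h" shows "subst h (f * g) = subst h f * subst h g"
proof (rule eqN_all)
  fix N
  define \<phi> where "\<phi> x = sc (coeff f (fst x)) * hp h (fst x) * (sc (coeff g (snd x)) * hp h (snd x))" for x
  let ?Q = "{(a, b). wdeg a + wdeg b \<le> N}"
  have "eqN N (subst h (f * g)) (\<Sum>\<mu>\<in>Mset N. sc (coeff (f * g) \<mu>) * hp h \<mu>)"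
    by (rule subst_eqN[OF h])
  also have "(\<Sum>\<mu>\<in>Mset N. sc (coeff (f * g) \<mu>) * hp h \<mu>) = (\<Sum>\<mu>\<in>Mset N. \<Sum>x\<in>Pm \<mu>. \<phi> x)"
    unfolding coeff_mult sc_sum sum_distrib_right
    by (intro sum.cong refl) (auto simp: \<phi>_def Pm_def sc_mult hp_add algebra_simps)
  also have "\<dots> = (\<Sum>x\<in>?Q. \<phi> x)"
    by (rule sum_Pm_group)
  also have "eqN N \<dots> (\<Sum>x\<in>Mset N \<times> Mset N. \<phi> x)"
  proof -
    have sub: "?Q \<subseteq> Mset N \<times> Mset N" by (auto simp: Mset_def)
    have "(\<Sum>x\<in>Mset N \<times> Mset N. \<phi> x) = (\<Sum>x\<in>Mset N \<times> Mset N - ?Q. \<phi> x) + (\<Sum>x\<in>?Q. \<phi> x)"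
      by (rule sum.subset_diff[OF sub]) simp
    moreover have "ordge (Suc N) (\<Sum>x\<in>Mset N \<times> Mset N - ?Q. \<phi> x)"
    proof (rule ordge_sum)
      fix x assume x: "x \<in> Mset N \<times> Mset N - ?Q"
      have "ordge (wdeg (fst x) + wdeg (snd x)) (\<phi> x)"
        unfolding \<phi>_def by (intro ordge_mult ordge_sc_mult ordge_hp h)
      then show "ordge (Suc N) (\<phi> x)"
        using x by (auto elim: ordge_mono)
    qed
    ultimately show ?thesis
      by (simp add: eqN_def)
  qed
  also have "(\<Sum>x\<in>Mset N \<times> Mset N. \<phi> x)
      = (\<Sum>\<mu>\<in>Mset N. sc (coeff f \<mu>) * hp h \<mu>) * (\<Sum>\<mu>\<in>Mset N. sc (coeff g \<mu>) * hp h \<mu>)"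
    by (simp add: sum_product sum.cartesian_product \<phi>_def case_prod_beta)
  also have "eqN N \<dots> (subst h f * subst h g)"
    by (intro eqN_mult subst_eqN' h)
  finally show "eqN N (subst h (f * g)) (subst h f * subst h g)" .
qed



section \<open>Sign twist\<close>

lift_definition Tw :: "ps \<Rightarrow> ps" is "\<lambda>f m. (-1) ^ mono_count m * f m" .

lemma coeff_Tw: "coeff (Tw f) m = (-1) ^ mono_count m * coeff f m"
  by transfer simp

lemma Tw_add [simp]: "Tw (f + g) = Tw f + Tw g"
  by (rule ps_eqI) (simp add: coeff_Tw algebra_simps)

lemma Tw_uminus [simp]: "Tw (- f) = - Tw f"
  by (rule ps_eqI) (simp add: coeff_Tw algebra_simps)

lemma Tw_diff [simp]: "Tw (f - g) = Tw f - Tw g"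
  by (rule ps_eqI) (simp add: coeff_Tw algebra_simps)

lemma Tw_mult [simp]: "Tw (f * g) = Tw f * Tw g"
proof (rule ps_eqI)
  fix m
  show "coeff (Tw (f * g)) m = coeff (Tw f * Tw g) m"
    unfolding coeff_Tw coeff_mult sum_distrib_left
    by (rule sum.cong) (auto simp: Pm_def count_add power_add)
qed

lemma Tw_sc [simp]: "Tw (sc c) = sc c"
  by (rule ps_eqI) (simp add: coeff_Tw coeff_sc)

lemma Tw_one [simp]: "Tw 1 = 1"
  using Tw_sc[of 1] by simp

lemma Tw_zero [simp]: "Tw 0 = 0"
  using Tw_sc[of 0] by simp

lemma Tw_power [simp]: "Tw (f ^ n) = Tw f ^ n"
  by (induction n) auto

lemma Tw_prod: "Tw (prod F S) = (\<Prod>i\<in>S. Tw (F i))"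
  by (induction S rule: infinite_finite_induct) auto

lemma Tw_X: "Tw X = - X"
  by (rule ps_eqI) (simp add: coeff_Tw coeff_X)

lemma Tw_psum: "Tw (psum F) = psum (\<lambda>i. Tw (F i))"
  by (rule ps_eqI) (simp add: coeff_Tw psum_def sf_sum_family_def sum_distrib_left)

lemma Tw_hp: "Tw (hp h \<mu>) = hp (\<lambda>i. Tw (h i)) \<mu>"
  by (simp add: hp_def Tw_prod)

lemma ordge_Tw [simp]: "ordge d (Tw f) = ordge d f"
  by (simp add: ordge_def coeff_Tw)

lemma Tw_subst: "Tw (subst h g) = subst (\<lambda>i. Tw (h i)) g"
  by (simp add: subst_def Tw_psum Tw_hp)

lemma hp_neg: "hp (\<lambda>i. - h i) \<mu> = (-1) ^ mono_count \<mu> * hp h \<mu>"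
proof -
  have "hp (\<lambda>i. - h i) \<mu> = (\<Prod>i\<in>Poly_Mapping.keys \<mu>. (-1) ^ Poly_Mapping.lookup \<mu> i * h i ^ Poly_Mapping.lookup \<mu> i)"
    unfolding hp_def by (rule prod.cong) (rule refl, rule power_minus)
  also have "\<dots> = (\<Prod>i\<in>Poly_Mapping.keys \<mu>. (-1) ^ Poly_Mapping.lookup \<mu> i) * hp h \<mu>"
    unfolding hp_def by (rule prod.distrib)
  also have "(\<Prod>i\<in>Poly_Mapping.keys \<mu>. (-1::ps) ^ Poly_Mapping.lookup \<mu> i) = (-1) ^ mono_count \<mu>"
    unfolding mono_count_def by (rule power_sum[symmetric])
  finally show ?thesis .
qed

lemma sc_neg_one_power: "sc ((-1) ^ n) = (-1) ^ n"
  by (simp add: sc_power sc_uminus)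

lemma subst_neg: "subst (\<lambda>i. - h i) g = subst h (Tw g)"
  unfolding subst_def hp_neg coeff_Tw
  by (simp add: sc_mult sc_neg_one_power mult_ac)

lemma Dj_Tw: "Dj j (Tw f) = - Tw (Dj j f)"
  by (rule ps_eqI) (simp add: coeff_Dj coeff_Tw count_add)

lemma coeff_Tw_0: "coeff (Tw f) 0 = coeff f 0"
  by (simp add: coeff_Tw)

section \<open>Chain rule for the derivative in p1\<close>

lemma Dj_prod_zero: "(\<And>i. i \<in> S \<Longrightarrow> Dj j (F i) = 0) \<Longrightarrow> Dj j (prod F S) = 0"
  by (induction S rule: infinite_finite_induct) (auto simp: Dj_mult)

lemma Dj_power_zero: "Dj j f = 0 \<Longrightarrow> Dj j (f ^ n) = 0"
  by (cases n) (simp, simp only: Dj_power, simp)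

lemma Dj_hp:
  assumes h: "\<And>k. k \<noteq> 0 \<Longrightarrow> Dj 0 (h k) = 0"
  shows "Dj 0 (hp h \<mu>) = of_nat (Poly_Mapping.lookup \<mu> 0) * hp h (\<mu> - e1 0) * Dj 0 (h 0)"
proof -
  let ?S = "insert 0 (Poly_Mapping.keys \<mu>)"
  define R where "R = (\<Prod>i\<in>?S - {0}. h i ^ Poly_Mapping.lookup \<mu> i)"
  have DR: "Dj 0 R = 0"
    unfolding R_def by (rule Dj_prod_zero) (auto intro: Dj_power_zero h)
  have "hp h \<mu> = (\<Prod>i\<in>?S. h i ^ Poly_Mapping.lookup \<mu> i)"
    by (rule hp_superset) auto
  also have "\<dots> = h 0 ^ Poly_Mapping.lookup \<mu> 0 * R"
    unfolding R_def by (subst prod.remove[of _ 0]) auto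
  finally have 1: "hp h \<mu> = h 0 ^ Poly_Mapping.lookup \<mu> 0 * R" .
  have "Poly_Mapping.keys (\<mu> - e1 0) \<subseteq> ?S"
  proof
    fix x assume "x \<in> Poly_Mapping.keys (\<mu> - e1 0)"
    then have "Poly_Mapping.lookup \<mu> x - Poly_Mapping.lookup (e1 0) x \<noteq> 0"
      by (simp add: in_keys_iff lookup_minus)
    then show "x \<in> ?S" by (auto simp: in_keys_iff)
  qed
  then have "hp h (\<mu> - e1 0) = (\<Prod>i\<in>?S. h i ^ Poly_Mapping.lookup (\<mu> - e1 0) i)"
    by (intro hp_superset) auto
  also have "\<dots> = h 0 ^ (Poly_Mapping.lookup \<mu> 0 - 1) * R"
    unfolding R_def by (subst prod.remove[of _ 0]) (auto simp: lookup_minus lookup_single when_def intro!: prod.cong)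
  finally have 2: "hp h (\<mu> - e1 0) = h 0 ^ (Poly_Mapping.lookup \<mu> 0 - 1) * R" .
  show ?thesis
  proof (cases "Poly_Mapping.lookup \<mu> 0")
    case 0
    then show ?thesis by (simp add: 1 Dj_mult DR)
  next
    case (Suc n)
    have "Dj 0 (hp h \<mu>) = Dj 0 (h 0 ^ Suc n) * R"
      by (simp only: 1 Suc Dj_mult DR) simp
    also have "\<dots> = of_nat (Suc n) * h 0 ^ n * Dj 0 (h 0) * R"
      by (simp only: Dj_power)
    also have "\<dots> = of_nat (Poly_Mapping.lookup \<mu> 0) * hp h (\<mu> - e1 0) * Dj 0 (h 0)"
      by (simp only: 2 Suc) (simp add: mult_ac)
    finally show ?thesis .
  qed
qed

lemma Mset_shift:
  "(\<Sum>\<mu>\<in>Mset (Suc N). of_nat (Poly_Mapping.lookup \<mu> 0) * \<psi> \<mu>)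
   = (\<Sum>\<nu>\<in>Mset N. of_nat (Poly_Mapping.lookup \<nu> 0 + 1) * \<psi> (\<nu> + e1 0))"
  (is "?L = ?R")
proof -
  let ?T = "{\<mu> \<in> Mset (Suc N). Poly_Mapping.lookup \<mu> 0 \<noteq> 0}"
  have "?L = (\<Sum>\<mu>\<in>?T. of_nat (Poly_Mapping.lookup \<mu> 0) * \<psi> \<mu>)"
    by (rule sum.mono_neutral_right) auto
  also have "\<dots> = ?R"
  proof (rule sum.reindex_bij_witness[of _ "\<lambda>\<nu>. \<nu> + e1 0" "\<lambda>\<mu>. \<mu> - e1 0"])
    fix \<mu> assume "\<mu> \<in> ?T"
    then have mu: "wdeg \<mu> \<le> Suc N" "Poly_Mapping.lookup \<mu> 0 \<noteq> 0" by (auto simp: Mset_def)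
    have eq: "\<mu> - e1 0 + e1 0 = \<mu>"
      using mu(2) by (intro poly_mapping_eqI) (auto simp: lookup_add lookup_minus lookup_single when_def)
    show "\<mu> - e1 0 + e1 0 = \<mu>" by (rule eq)
    have "wdeg \<mu> = wdeg (\<mu> - e1 0) + 1" using wdeg_add[of "\<mu> - e1 0" "e1 0"] eq by simp
    then show "\<mu> - e1 0 \<in> Mset N" using mu by (simp add: Mset_def)
    have lk: "Poly_Mapping.lookup (\<mu> - e1 0) 0 + 1 = Poly_Mapping.lookup \<mu> 0"
      using mu(2) by (simp add: lookup_minus)
    show "of_nat (Poly_Mapping.lookup (\<mu> - e1 0) 0 + 1) * \<psi> (\<mu> - e1 0 + e1 0) =
          of_nat (Poly_Mapping.lookup \<mu> 0) * \<psi> \<mu>"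
      using eq lk by simp
  next
    fix \<nu> assume "\<nu> \<in> Mset N"
    then show "\<nu> + e1 0 - e1 0 = \<nu>" "\<nu> + e1 0 \<in> ?T"
      by (auto simp: Mset_def wdeg_add lookup_add)
  qed
  finally show ?thesis .
qed

lemma Dj_subst:
  assumes good: "good h" and h: "\<And>k. k \<noteq> 0 \<Longrightarrow> Dj 0 (h k) = 0"
  shows "Dj 0 (subst h g) = subst h (Dj 0 g) * Dj 0 (h 0)"
proof (rule eqN_all)
  fix N
  have "eqN (N + Suc 0) (subst h g) (\<Sum>\<mu>\<in>Mset (Suc N). sc (coeff g \<mu>) * hp h \<mu>)"
    using subst_eqN[OF good, of "Suc N" g] by simp
  then have "eqN N (Dj 0 (subst h g)) (Dj 0 (\<Sum>\<mu>\<in>Mset (Suc N). sc (coeff g \<mu>) * hp h \<mu>))"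
    by (rule Dj_eqN)
  also have "Dj 0 (\<Sum>\<mu>\<in>Mset (Suc N). sc (coeff g \<mu>) * hp h \<mu>)
      = (\<Sum>\<mu>\<in>Mset (Suc N). of_nat (Poly_Mapping.lookup \<mu> 0) * (sc (coeff g \<mu>) * hp h (\<mu> - e1 0))) * Dj 0 (h 0)"
    unfolding Dj_sum Dj_sc_mult Dj_hp[OF h] sum_distrib_right by (rule sum.cong) (simp_all add: Dj_hp[OF h] mult_ac)
  also have "\<dots> = (\<Sum>\<nu>\<in>Mset N. of_nat (Poly_Mapping.lookup \<nu> 0 + 1) * (sc (coeff g (\<nu> + e1 0)) * hp h \<nu>)) * Dj 0 (h 0)"
    by (subst Mset_shift) simp
  also have "\<dots> = (\<Sum>\<nu>\<in>Mset N. sc (coeff (Dj 0 g) \<nu>) * hp h \<nu>) * Dj 0 (h 0)"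
    by (simp add: coeff_Dj sc_mult sc_add sc_of_nat mult_ac)
  also have "eqN N \<dots> (subst h (Dj 0 g) * Dj 0 (h 0))"
    by (intro eqN_mult subst_eqN' good eqN_refl)
  finally show "eqN N (Dj 0 (subst h g)) (subst h (Dj 0 g) * Dj 0 (h 0))" .
qed

section \<open>The operations p_k o -\<close>

definition Rk :: "nat \<Rightarrow> mono \<Rightarrow> mono \<Rightarrow> bool" where
  "Rk k m a \<longleftrightarrow> (\<forall>i. Poly_Mapping.lookup m i =
      (if k dvd Suc i then Poly_Mapping.lookup a (Suc i div k - 1) else 0))"

lift_definition pk :: "nat \<Rightarrow> ps \<Rightarrow> ps" is sf_pk_pleth .

lemma coeff_pk: "coeff (pk k f) m = sum (coeff f) {a. Rk k m a}"
  by transfer (simp add: sf_pk_pleth_def Rk_def)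

lemma Rk_lookup:
  assumes "Rk k m a" "k \<ge> 1"
  shows "Poly_Mapping.lookup m (k * Suc j - 1) = Poly_Mapping.lookup a j"
proof -
  have s: "Suc (k * Suc j - 1) = k * Suc j" using assms(2) by (cases k) auto
  have "Poly_Mapping.lookup m (k * Suc j - 1) = (if k dvd Suc (k * Suc j - 1)
      then Poly_Mapping.lookup a (Suc (k * Suc j - 1) div k - 1) else 0)"
    using assms(1) unfolding Rk_def by blast
  then show ?thesis using s assms(2) by simp
qed

lemma Rk_unique:
  assumes "Rk k m a" "Rk k m a'" "k \<ge> 1"
  shows "a = a'"
proof (rule poly_mapping_eqI)
  fix j show "Poly_Mapping.lookup a j = Poly_Mapping.lookup a' j"
    using Rk_lookup[OF assms(1,3), of j] Rk_lookup[OF assms(2,3), of j] by simp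
qed

lemma finite_Rk: "k \<ge> 1 \<Longrightarrow> finite {a. Rk k m a}"
proof -
  assume k: "k \<ge> 1"
  show ?thesis
  proof (cases "\<exists>a. Rk k m a")
    case True
    then obtain a where "Rk k m a" by blast
    then have "{a. Rk k m a} \<subseteq> {a}" using Rk_unique k by blast
    then show ?thesis using finite_subset by blast
  qed simp
qed

lemma Rk_keys:
  assumes "Rk k m a" "k \<ge> 1"
  shows "Poly_Mapping.keys m = (\<lambda>j. k * Suc j - 1) ` Poly_Mapping.keys a"
proof (rule set_eqI)
  fix i
  show "i \<in> Poly_Mapping.keys m \<longleftrightarrow> i \<in> (\<lambda>j. k * Suc j - 1) ` Poly_Mapping.keys a"
  proof
    assume i: "i \<in> Poly_Mapping.keys m"
    then have "Poly_Mapping.lookup m i \<noteq> 0" by (simp add: in_keys_iff)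
    moreover have "Poly_Mapping.lookup m i = (if k dvd Suc i then Poly_Mapping.lookup a (Suc i div k - 1) else 0)"
      using assms(1) unfolding Rk_def by blast
    ultimately have dv: "k dvd Suc i" and nz: "Poly_Mapping.lookup a (Suc i div k - 1) \<noteq> 0"
      by (auto split: if_splits)
    obtain q where q: "Suc i = k * q" using dv by blast
    with assms(2) have qpos: "q \<ge> 1" by (cases q) auto
    have "Suc i div k = q" using q assms(2) by simp
    then have "i = k * Suc (Suc i div k - 1) - 1" using q qpos by simp
    then show "i \<in> (\<lambda>j. k * Suc j - 1) ` Poly_Mapping.keys a"
      using nz by (auto simp: in_keys_iff)
  next
    assume "i \<in> (\<lambda>j. k * Suc j - 1) ` Poly_Mapping.keys a"
    then obtain j where "j \<in> Poly_Mapping.keys a" "i = k * Suc j - 1" by blast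
    then show "i \<in> Poly_Mapping.keys m"
      using Rk_lookup[OF assms] by (simp add: in_keys_iff)
  qed
qed

lemma inj_kSuc: "k \<ge> 1 \<Longrightarrow> inj (\<lambda>j::nat. k * Suc j - 1)"
proof (rule injI)
  fix x y assume k: "k \<ge> 1" and eq: "k * Suc x - 1 = k * Suc y - 1"
  have "k * Suc x \<ge> 1" "k * Suc y \<ge> 1" using k by simp_all
  with eq have "k * Suc x = k * Suc y" by linarith
  then show "x = y" using k by simp
qed

lemma Rk_wdeg:
  assumes "Rk k m a" "k \<ge> 1"
  shows "wdeg m = k * wdeg a"
proof -
  have "wdeg m = (\<Sum>i\<in>(\<lambda>j. k * Suc j - 1) ` Poly_Mapping.keys a. Suc i * Poly_Mapping.lookup m i)"
    unfolding wdeg_def Rk_keys[OF assms] ..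
  also have "\<dots> = (\<Sum>j\<in>Poly_Mapping.keys a. Suc (k * Suc j - 1) * Poly_Mapping.lookup m (k * Suc j - 1))"
    by (rule sum.reindex[unfolded comp_def]) (rule inj_on_subset[OF inj_kSuc[OF assms(2)]], simp)
  also have "\<dots> = (\<Sum>j\<in>Poly_Mapping.keys a. k * (Suc j * Poly_Mapping.lookup a j))"
  proof (intro sum.cong refl)
    fix j
    have "Suc (k * Suc j - 1) = k * Suc j" using assms(2) by (cases k) auto
    then show "Suc (k * Suc j - 1) * Poly_Mapping.lookup m (k * Suc j - 1) = k * (Suc j * Poly_Mapping.lookup a j)"
      using Rk_lookup[OF assms, of j] by (metis mult.assoc)
  qed
  also have "\<dots> = k * wdeg a"
    by (simp add: wdeg_def sum_distrib_left)
  finally show ?thesis .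
qed

lemma Rk_count:
  assumes "Rk k m a" "k \<ge> 1"
  shows "mono_count m = mono_count a"
proof -
  have "mono_count m = (\<Sum>i\<in>(\<lambda>j. k * Suc j - 1) ` Poly_Mapping.keys a. Poly_Mapping.lookup m i)"
    unfolding mono_count_def Rk_keys[OF assms] ..
  also have "\<dots> = (\<Sum>j\<in>Poly_Mapping.keys a. Poly_Mapping.lookup m (k * Suc j - 1))"
    by (rule sum.reindex[unfolded comp_def]) (rule inj_on_subset[OF inj_kSuc[OF assms(2)]], simp)
  also have "\<dots> = (\<Sum>j\<in>Poly_Mapping.keys a. Poly_Mapping.lookup a j)"
    by (intro sum.cong refl) (rule Rk_lookup[OF assms])
  also have "\<dots> = mono_count a"
    by (simp add: mono_count_def)
  finally show ?thesis .
qed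

lemma Rk_one: "Rk 1 m a \<longleftrightarrow> a = m"
proof
  assume "Rk 1 m a" then show "a = m"
    by (intro poly_mapping_eqI) (simp add: Rk_def)
qed (simp add: Rk_def)

lemma pk_one: "pk 1 f = f"
  by (rule ps_eqI) (simp add: coeff_pk Rk_one[unfolded One_nat_def])

lemma pk_uminus: "pk k (- f) = - pk k f"
  by (rule ps_eqI) (simp add: coeff_pk sum_negf)

lemma ordge_pk:
  assumes "coeff f 0 = 0"
  shows "ordge (Suc k) (pk (Suc k) f)"
  unfolding ordge_def
proof (intro allI impI)
  fix m assume "coeff (pk (Suc k) f) m \<noteq> 0"
  then obtain a where "a \<in> {a. Rk (Suc k) m a}" "coeff f a \<noteq> 0"
    unfolding coeff_pk by (rule sum.not_neutral_contains_not_neutral)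
  then have a: "Rk (Suc k) m a" "coeff f a \<noteq> 0" by auto
  then have "a \<noteq> 0" using assms by auto
  then have "wdeg a \<noteq> 0" by simp
  then have "wdeg a \<ge> 1" by linarith
  then show "Suc k \<le> wdeg m" using Rk_wdeg[OF a(1)] mult_le_mono2[of 1 "wdeg a" "Suc k"] by simp
qed

lemma pk_eqN:
  assumes "eqN N f g" "k \<ge> 1"
  shows "eqN N (pk k f) (pk k g)"
  unfolding eqN_iff coeff_pk
proof (intro allI impI sum.cong refl)
  fix m a assume m: "wdeg m \<le> N" and "a \<in> {a. Rk k m a}"
  then have "wdeg m = k * wdeg a" using Rk_wdeg assms(2) by auto
  moreover have "1 * wdeg a \<le> k * wdeg a" by (rule mult_le_mono1) (use assms(2) in simp)
  ultimately have "wdeg a \<le> N" using m by linarith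
  then show "coeff f a = coeff g a" using assms(1) by (simp add: eqN_iff)
qed

lemma Dj_pk:
  assumes "k \<ge> 2"
  shows "Dj 0 (pk k f) = 0"
proof (rule ps_eqI)
  fix m
  have "{a. Rk k (m + e1 0) a} = {}"
  proof (rule ccontr)
    assume "{a. Rk k (m + e1 0) a} \<noteq> {}"
    then obtain a where "Rk k (m + e1 0) a" by blast
    then have "Poly_Mapping.lookup (m + e1 0) 0 = (if k dvd Suc 0 then Poly_Mapping.lookup a (Suc 0 div k - 1) else 0)"
      unfolding Rk_def by blast
    moreover have "\<not> k dvd Suc 0" using assms by auto
    ultimately have "Poly_Mapping.lookup (m + e1 0) 0 = 0" by simp
    then show False by (simp add: lookup_add)
  qed
  then show "coeff (Dj 0 (pk k f)) m = coeff 0 m"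
    by (simp add: coeff_Dj coeff_pk)
qed

lemma Tw_pk:
  assumes "k \<ge> 1"
  shows "Tw (pk k f) = pk k (Tw f)"
proof (rule ps_eqI)
  fix m
  show "coeff (Tw (pk k f)) m = coeff (pk k (Tw f)) m"
    unfolding coeff_Tw coeff_pk sum_distrib_left
  proof (intro sum.cong refl)
    fix a assume "a \<in> {a. Rk k m a}"
    then have "mono_count m = mono_count a" using Rk_count[OF _ assms] by blast
    then show "(-1) ^ mono_count m * coeff f a = (-1) ^ mono_count a * coeff f a" by simp
  qed
qed

definition hs :: "ps \<Rightarrow> nat \<Rightarrow> ps" where
  "hs f = (\<lambda>k. pk (Suc k) f)"

lemma good_hs: "coeff f 0 = 0 \<Longrightarrow> good (hs f)"
  by (simp add: good_def hs_def ordge_pk)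

lemma hs_0: "hs f 0 = f"
  by (simp add: hs_def pk_one[unfolded One_nat_def])

lemma Dj_hs: "k \<noteq> 0 \<Longrightarrow> Dj 0 (hs f k) = 0"
  by (simp add: hs_def Dj_pk)

lemma Tw_hs: "(\<lambda>i. Tw (hs f i)) = hs (Tw f)"
  by (simp add: hs_def Tw_pk)

lemma hs_uminus: "hs (- f) = (\<lambda>i. - hs f i)"
  by (simp add: hs_def pk_uminus)

lemma hs_eqN:
  assumes "eqN N f g"
  shows "eqN N (hp (hs f) \<mu>) (hp (hs g) \<mu>)"
  unfolding hp_def hs_def
  by (intro eqN_prod eqN_power pk_eqN assms) simp

lemma foldr_coeff:
  "foldr (\<lambda>i acc. sf_mult (sf_pow (Poly_Mapping.lookup \<mu> i) (coeff (H i))) acc) xs sf_one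
   = coeff (prod_list (map (\<lambda>i. H i ^ Poly_Mapping.lookup \<mu> i) xs))"
  by (induction xs) (simp_all add: one_ps.rep_eq times_ps.rep_eq coeff_power)

lemma subst_mono_coeff:
  "sf_subst_mono (\<lambda>i. sf_pk_pleth (Suc i) f) \<mu> = coeff (hp (hs (Abs_ps f)) \<mu>)"
proof -
  have "sf_subst_mono (\<lambda>i. sf_pk_pleth (Suc i) f) \<mu>
       = sf_subst_mono (\<lambda>i. coeff (hs (Abs_ps f) i)) \<mu>"
    by (simp add: hs_def pk.rep_eq)
  also have "\<dots> = coeff (prod_list (map (\<lambda>i. hs (Abs_ps f) i ^ Poly_Mapping.lookup \<mu> i)
                    (sorted_list_of_set (Poly_Mapping.keys \<mu>))))"
    unfolding sf_subst_mono_def by (rule foldr_coeff)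
  also have "\<dots> = coeff (hp (hs (Abs_ps f)) \<mu>)"
    unfolding hp_def by (subst prod.distinct_set_conv_list[symmetric]) auto
  finally show ?thesis .
qed

lemma coeff_sc_mult_fun: "coeff (sc c * f) = sf_smul c (coeff f)"
  by (rule ext) (simp add: sf_smul_def)

lemma pleth_coeff: "sf_pleth g f = coeff (subst (hs (Abs_ps f)) (Abs_ps g))"
  unfolding sf_pleth_def subst_def psum_def
  by (simp add: subst_mono_coeff coeff_sc_mult_fun)



section \<open>The series L and E = exp L\<close>

lemma count_eq_0_iff [simp]: "mono_count m = 0 \<longleftrightarrow> m = 0"
proof
  assume "mono_count m = 0"
  then have "\<forall>i\<in>Poly_Mapping.keys m. Poly_Mapping.lookup m i = 0"
    unfolding mono_count_def by simp
  then have "\<forall>i. Poly_Mapping.lookup m i = 0" by (auto simp: in_keys_iff)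
  then show "m = 0" by (intro poly_mapping_eqI) simp
qed simp

lemma Pm_0: "Pm 0 = {(0, 0)}"
proof -
  have z: "a = 0 \<and> b = 0" if ab: "a + b = (0::mono)" for a b
  proof -
    have "mono_count (a + b) = 0" using ab by simp
    then have "mono_count a = 0 \<and> mono_count b = 0" unfolding count_add by simp
    then show ?thesis by simp
  qed
  show ?thesis
  proof (rule set_eqI)
    fix x :: "mono \<times> mono"
    obtain a b where x: "x = (a, b)" by force
    show "x \<in> Pm 0 \<longleftrightarrow> x \<in> {(0, 0)}" using z[of a b] by (auto simp: Pm_def x)
  qed
qed

lemma coeff_mult_0: "coeff (f * g) 0 = coeff f 0 * coeff g 0"
  by (simp add: coeff_mult Pm_0)

lemma e1_inj [simp]: "(e1 j = e1 k) = (j = k)"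
proof
  assume "e1 j = e1 k"
  then have "Poly_Mapping.lookup (e1 j) j = Poly_Mapping.lookup (e1 k) j" by simp
  then show "j = k" by (simp add: lookup_single when_def split: if_splits)
qed simp

lemma e1_inj' [simp]: "(Poly_Mapping.single (j::nat) (Suc 0) = Poly_Mapping.single k (Suc 0)) = (j = k)"
  using e1_inj[of j k] unfolding One_nat_def .

lemma e1_neq_0 [simp]: "e1 k \<noteq> 0" "Poly_Mapping.single k (Suc 0) \<noteq> 0"
proof -
  have "Poly_Mapping.lookup (e1 k) k \<noteq> Poly_Mapping.lookup 0 k" by simp
  then show "e1 k \<noteq> 0" by metis
  then show "Poly_Mapping.single k (Suc 0) \<noteq> 0" by simp
qed

definition Lp :: ps where
  "Lp = Abs_ps (sf_sum_family (\<lambda>k. sf_smul (1 / of_nat (Suc k)) (sf_p (Suc k))))"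

definition Ep :: ps where
  "Ep = Abs_ps (sf_exp (coeff Lp))"

lemma Comm_eq: "Abs_ps Comm = Ep - 1"
  by (rule ps_eqI) (simp add: Comm_def Ep_def Lp_def sf_diff_def one_ps.rep_eq)

lemma coeff_Lp: "coeff Lp m = (\<Sum>k\<in>{k. m = e1 k}. 1 / of_nat (Suc k))"
proof -
  have "coeff Lp m = (\<Sum>i | 1 / of_nat (Suc i) * (if m = e1 i then 1 else 0) \<noteq> (0::rat).
      1 / of_nat (Suc i) * (if m = e1 i then 1 else 0))"
    by (simp add: Lp_def sf_sum_family_def sf_smul_def sf_p_def)
  also have "\<dots> = (\<Sum>k\<in>{k. m = e1 k}. 1 / of_nat (Suc k))"
    by (rule sum.cong) auto
  finally show ?thesis .
qed

lemma coeff_Lp_0: "coeff Lp 0 = 0"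
  by (simp add: coeff_Lp)

lemma ordge_Lp: "ordge 1 Lp"
  unfolding ordge_def
proof (intro allI impI)
  fix m assume "coeff Lp m \<noteq> 0"
  then have "m \<noteq> 0" using coeff_Lp_0 by auto
  then have "wdeg m \<noteq> 0" by simp
  then show "1 \<le> wdeg m" by linarith
qed

lemma Tw_Lp: "Tw Lp = - Lp"
proof (rule ps_eqI)
  fix m
  show "coeff (Tw Lp) m = coeff (- Lp) m"
    unfolding coeff_Tw coeff_uminus coeff_Lp sum_distrib_left sum_negf[symmetric]
    by (intro sum.cong) auto
qed

lemma Dj_Lp: "Dj j Lp = sc (1 / of_nat (Suc j))"
proof (rule ps_eqI)
  fix m
  show "coeff (Dj j Lp) m = coeff (sc (1 / of_nat (Suc j))) m"
  proof (cases "m = 0")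
    case True
    have "{k. e1 j = e1 k} = {j}" by auto
    then show ?thesis using True by (simp add: coeff_Dj coeff_Lp coeff_sc)
  next
    case False
    have "{k. m + e1 j = e1 k} = {}"
    proof (rule ccontr)
      assume "{k. m + e1 j = e1 k} \<noteq> {}"
      then obtain k where "m + e1 j = e1 k" by blast
      then have "mono_count m + 1 = 1" using count_add[of m "e1 j"] by simp
      then show False using False by simp
    qed
    then show ?thesis using False by (simp add: coeff_Dj coeff_Lp coeff_sc)
  qed
qed

definition Tn :: "nat \<Rightarrow> ps" where
  "Tn n = sc (1 / fact n) * Lp ^ n"

lemma Ep_psum: "Ep = psum Tn"
  unfolding Ep_def psum_def sf_exp_def Tn_def
  by (simp add: coeff_sc_mult_fun coeff_power)

lemma Ep_eqN: "N \<le> K \<Longrightarrow> eqN N Ep (\<Sum>n\<le>K. Tn n)"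
proof -
  assume "N \<le> K"
  have "eqN K Ep (sum Tn {n. id n \<le> K})"
    unfolding Ep_psum
  proof (rule psum_eqN)
    show "finite {n. id n \<le> K}" by simp
    fix n show "ordge (id n) (Tn n)"
      unfolding Tn_def using ordge_power[OF ordge_Lp, of n] by (simp add: ordge_sc_mult)
  qed
  moreover have "{n. id n \<le> K} = {..K}" by auto
  ultimately show ?thesis using \<open>N \<le> K\<close> eqN_mono by metis
qed

lemma fact_aux: "(1 / fact (Suc n) :: rat) * of_nat (Suc n) = 1 / fact n"
proof -
  have a: "(fact n::rat) \<noteq> 0" by simp
  have b: "(of_nat (Suc n)::rat) \<noteq> 0" by (simp only: of_nat_eq_0_iff)
  have "(1 / fact (Suc n) :: rat) * of_nat (Suc n) = 1 / (of_nat (Suc n) * fact n) * of_nat (Suc n)"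
    by (simp only: fact_Suc)
  also have "\<dots> = 1 / fact n" using a b by (simp only: divide_simps) simp
  finally show ?thesis .
qed

lemma Dj_Tn_Suc: "Dj j (Tn (Suc n)) = Tn n * Dj j Lp"
proof -
  have "Dj j (Tn (Suc n)) = sc (1 / fact (Suc n)) * (of_nat (Suc n) * Lp ^ n * Dj j Lp)"
    unfolding Tn_def Dj_sc_mult by (simp only: Dj_power)
  also have "\<dots> = sc (1 / fact (Suc n) * of_nat (Suc n)) * Lp ^ n * Dj j Lp"
    by (simp only: sc_mult sc_of_nat mult_ac)
  also have "\<dots> = Tn n * Dj j Lp"
    by (simp only: fact_aux Tn_def)
  finally show ?thesis .
qed

lemma Dj_Ep: "Dj j Ep = sc (1 / of_nat (Suc j)) * Ep"
proof (rule eqN_all)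
  fix N
  let ?c = "sc (1 / of_nat (Suc j))"
  have "eqN (N + Suc j) Ep (\<Sum>n\<le>Suc (N + j). Tn n)"
    by (rule Ep_eqN) simp
  then have "eqN N (Dj j Ep) (Dj j (\<Sum>n\<le>Suc (N + j). Tn n))"
    by (rule Dj_eqN)
  also have "Dj j (\<Sum>n\<le>Suc (N + j). Tn n) = Dj j (Tn 0 + (\<Sum>n\<le>N + j. Tn (Suc n)))"
    by (simp only: sum.atMost_Suc_shift)
  also have "\<dots> = Dj j (Tn 0) + (\<Sum>n\<le>N + j. Dj j (Tn (Suc n)))"
    by (simp only: Dj_add Dj_sum)
  also have "\<dots> = (\<Sum>n\<le>N + j. Tn n) * ?c"
    by (simp only: Dj_Tn_Suc Dj_Lp) (simp add: Tn_def sum_distrib_right)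
  also have "eqN N \<dots> (Ep * ?c)"
    by (intro eqN_mult eqN_refl eqN_sym[OF Ep_eqN]) simp
  finally show "eqN N (Dj j Ep) (?c * Ep)" by (simp add: mult.commute)
qed

lemma coeff_Ep_0: "coeff Ep 0 = 1"
proof -
  have "eqN 0 Ep (\<Sum>n\<le>0. Tn n)" by (rule Ep_eqN) simp
  then show ?thesis by (simp add: eqN_iff Tn_def coeff_one)
qed

lemma const_of_Dj:
  assumes "\<And>j. Dj j f = 0"
  shows "f = sc (coeff f 0)"
proof (rule ps_eqI)
  fix m
  show "coeff f m = coeff (sc (coeff f 0)) m"
  proof (cases "m = 0")
    case False
    then obtain j where j: "j \<in> Poly_Mapping.keys m" by fastforce
    then have lk: "Poly_Mapping.lookup m j \<noteq> 0" by (simp add: in_keys_iff)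
    have eq: "m - e1 j + e1 j = m"
      using lk by (intro poly_mapping_eqI) (auto simp: lookup_add lookup_minus lookup_single when_def)
    have "coeff (Dj j f) (m - e1 j) = 0" using assms by simp
    then have "coeff f m = 0" unfolding coeff_Dj eq by simp
    then show ?thesis using False by (simp add: coeff_sc)
  qed (simp add: coeff_sc)
qed

lemma Tw_Ep_Ep: "Tw Ep * Ep = 1"
proof -
  have "Dj j (Tw Ep * Ep) = 0" for j
    by (simp add: Dj_mult Dj_Tw Dj_Ep algebra_simps)
  then have "Tw Ep * Ep = sc (coeff (Tw Ep * Ep) 0)" by (rule const_of_Dj)
  also have "coeff (Tw Ep * Ep) 0 = 1"
    by (simp add: coeff_mult_0 coeff_Tw_0 coeff_Ep_0)
  finally show ?thesis by simp
qed

section \<open>PreLie as a fixed point\<close>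

definition Phi :: "ps \<Rightarrow> ps" where
  "Phi f = X * (1 + subst (hs f) (Abs_ps Comm))"

lemma subst_hs_eqN:
  assumes f0: "coeff f 0 = 0" and g0: "coeff g 0 = 0" and eq: "eqN N f g"
  shows "eqN N (subst (hs f) c) (subst (hs g) c)"
proof -
  have "eqN N (subst (hs f) c) (\<Sum>\<mu>\<in>Mset N. sc (coeff c \<mu>) * hp (hs f) \<mu>)"
    by (rule subst_eqN[OF good_hs[OF f0]])
  also have "eqN N \<dots> (\<Sum>\<mu>\<in>Mset N. sc (coeff c \<mu>) * hp (hs g) \<mu>)"
    by (intro eqN_sum eqN_mult eqN_refl hs_eqN eq)
  also have "eqN N \<dots> (subst (hs g) c)"
    by (rule subst_eqN'[OF good_hs[OF g0]])
  finally show ?thesis .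
qed

lemma ordge_Phi: "ordge 1 (Phi f)"
  unfolding Phi_def by (rule ordge_mult_left[OF ordge_X])

lemma coeff_Phi_0: "coeff (Phi f) 0 = 0"
  using ordge_Phi[of f] by (rule ordgeD) simp

lemma Phi_contract:
  assumes "coeff f 0 = 0" "coeff g 0 = 0" "eqN N f g"
  shows "eqN (Suc N) (Phi f) (Phi g)"
proof -
  have "ordge (Suc N) (subst (hs f) (Abs_ps Comm) - subst (hs g) (Abs_ps Comm))"
    using subst_hs_eqN[OF assms] by (simp add: eqN_def)
  then have "ordge (1 + Suc N) (X * (subst (hs f) (Abs_ps Comm) - subst (hs g) (Abs_ps Comm)))"
    by (rule ordge_mult[OF ordge_X])
  moreover have "X * (subst (hs f) (Abs_ps Comm) - subst (hs g) (Abs_ps Comm)) = Phi f - Phi g"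
    by (simp add: Phi_def algebra_simps)
  ultimately show ?thesis by (simp add: eqN_def)
qed

lemma eqN_0_const: "coeff f 0 = coeff g 0 \<Longrightarrow> eqN 0 f g"
  by (simp add: eqN_iff)

primrec it :: "nat \<Rightarrow> ps" where
  "it 0 = 0"
| "it (Suc n) = Phi (it n)"

lemma it_coeff_0: "coeff (it n) 0 = 0"
proof (cases n)
  case (Suc k) then show ?thesis using coeff_Phi_0[of "it k"] by simp
qed simp

lemma it_step: "eqN n (it n) (it (Suc n))"
proof (induction n)
  case 0
  show ?case by (rule eqN_0_const) (simp add: it_coeff_0 coeff_Phi_0)
next
  case (Suc n)
  show ?case using Phi_contract[OF it_coeff_0 it_coeff_0 Suc] by simp
qed

lemma it_mono: "eqN n (it n) (it (n + k))"
proof (induction k)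
  case (Suc k)
  have "eqN n (it (n + k)) (it (Suc (n + k)))"
    using it_step[of "n + k"] by (rule eqN_mono) simp
  then show ?case using Suc eqN_trans by simp
qed simp

definition Pl :: ps where
  "Pl = Abs_ps (\<lambda>m. coeff (it (wdeg m)) m)"

lemma Pl_eqN: "eqN N Pl (it N)"
  unfolding eqN_iff
proof (intro allI impI)
  fix m assume m: "wdeg m \<le> N"
  have "eqN (wdeg m) (it (wdeg m)) (it (wdeg m + (N - wdeg m)))" by (rule it_mono)
  then have "coeff (it (wdeg m)) m = coeff (it N) m" using m by (simp add: eqN_iff)
  then show "coeff Pl m = coeff (it N) m" by (simp add: Pl_def)
qed

lemma Pl_coeff_0: "coeff Pl 0 = 0"
  by (simp add: Pl_def)

lemma Pl_fix: "Phi Pl = Pl"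
proof (rule eqN_all)
  fix N
  have "eqN (Suc N) (Phi Pl) (Phi (it N))"
    by (rule Phi_contract[OF Pl_coeff_0 it_coeff_0 Pl_eqN])
  also have "Phi (it N) = it (Suc N)" by simp
  also have "eqN (Suc N) \<dots> Pl" by (rule eqN_sym[OF Pl_eqN])
  finally show "eqN N (Phi Pl) Pl" by (rule eqN_mono) simp
qed

lemma fix_unique:
  assumes "coeff f 0 = 0" "Phi f = f" "coeff g 0 = 0" "Phi g = g"
  shows "f = g"
proof (rule eqN_all)
  fix N show "eqN N f g"
  proof (induction N)
    case 0 show ?case by (rule eqN_0_const) (simp add: assms)
  next
    case (Suc N)
    show ?case using Phi_contract[OF assms(1,3) Suc] assms(2,4) by simp
  qed
qed

lemma Q_iff:
  "(f 0 = 0 \<and> f = sf_mult (sf_p 1) (sf_add sf_one (sf_pleth Comm f)))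
   \<longleftrightarrow> (coeff (Abs_ps f) 0 = 0 \<and> Phi (Abs_ps f) = Abs_ps f)"
proof -
  have "sf_mult (sf_p 1) (sf_add sf_one (sf_pleth Comm f)) = coeff (Phi (Abs_ps f))"
    by (simp add: Phi_def times_ps.rep_eq plus_ps.rep_eq one_ps.rep_eq X.rep_eq pleth_coeff)
  moreover have "(f = coeff (Phi (Abs_ps f))) = (Phi (Abs_ps f) = Abs_ps f)"
  proof
    assume "f = coeff (Phi (Abs_ps f))"
    then have "Abs_ps f = Abs_ps (coeff (Phi (Abs_ps f)))" by simp
    then show "Phi (Abs_ps f) = Abs_ps f" by (simp add: coeff_inverse)
  next
    assume h: "Phi (Abs_ps f) = Abs_ps f"
    show "f = coeff (Phi (Abs_ps f))" by (simp add: h)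
  qed
  ultimately show ?thesis by simp
qed

lemma PreLie_prop: "coeff (Abs_ps PreLie) 0 = 0 \<and> Phi (Abs_ps PreLie) = Abs_ps PreLie"
proof -
  let ?Q = "\<lambda>f. f 0 = 0 \<and> f = sf_mult (sf_p 1) (sf_add sf_one (sf_pleth Comm f))"
  have ex: "?Q (coeff Pl)"
    unfolding Q_iff by (simp add: coeff_inverse Pl_coeff_0 Pl_fix)
  have un: "f = coeff Pl" if "?Q f" for f
  proof -
    have q: "coeff (Abs_ps f) 0 = 0 \<and> Phi (Abs_ps f) = Abs_ps f"
      using Q_iff[of f] that by blast
    have "Abs_ps f = Pl"
      using fix_unique[of "Abs_ps f" Pl] q Pl_coeff_0 Pl_fix by blast
    then have "coeff (Abs_ps f) = coeff Pl" by simp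
    then show ?thesis by simp
  qed
  have "?Q PreLie"
    unfolding PreLie_def by (rule theI[of ?Q, OF ex un])
  then show ?thesis unfolding Q_iff .
qed

lemma sf_dp1_coeff: "sf_dp1 (coeff f) = coeff (Dj 0 f)"
  by (rule ext) (simp add: sf_dp1_def coeff_Dj)

theorem mainTheorem3:
  shows "sf_add (sf_mult (sf_p 1) (sf_dp1 (sf_susp PreLie)))
                (sf_dp1 (sf_pleth Comm (sf_susp PreLie))) = sf_one"
proof -
  define P where "P = Abs_ps PreLie"
  define F where "F = - Tw P"
  define C where "C = Abs_ps Comm"
  have p0: "coeff P 0 = 0" and pfix: "Phi P = P"
    using PreLie_prop unfolding P_def by auto
  have F0: "coeff F 0 = 0" and mF0: "coeff (- F) 0 = 0"
    using p0 by (simp_all add: F_def coeff_Tw_0)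
  have gF: "good (hs F)" by (rule good_hs[OF F0])
  have gmF: "good (hs (- F))" by (rule good_hs[OF mF0])
  have C_eq: "C = Ep - 1" unfolding C_def by (rule Comm_eq)
  define U where "U = subst (hs F) Ep"
  define V where "V = subst (hs (- F)) Ep"
  have sC: "subst (hs F) C = U - 1"
    unfolding C_eq U_def by (simp add: subst_diff[OF gF] subst_one[OF gF])
  have smC: "subst (hs (- F)) C = V - 1"
    unfolding C_eq V_def by (simp add: subst_diff[OF gmF] subst_one[OF gmF])
  have "Tw P = Tw (Phi P)" using pfix by simp
  also have "\<dots> = - X * (1 + subst (hs (Tw P)) C)"
    unfolding Phi_def C_def by (simp add: Tw_X Tw_subst Tw_hs)
  also have "Tw P = - F" by (simp add: F_def)
  finally have "- F = - X * (1 + subst (hs (- F)) C)" .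
  then have FXV: "F = X * V" using smC by simp
  have V_alt: "V = subst (hs F) (Tw Ep)"
    unfolding V_def hs_uminus by (rule subst_neg)
  have UV: "U * V = 1"
    unfolding U_def V_alt using subst_mult[OF gF, of Ep "Tw Ep"] subst_one[OF gF] Tw_Ep_Ep
    by (simp add: mult.commute)
  have DEp: "Dj 0 Ep = Ep" using Dj_Ep[of 0] by simp
  have DU: "Dj 0 U = U * Dj 0 F"
    unfolding U_def using Dj_subst[OF gF Dj_hs, of Ep] by (simp add: DEp hs_0)
  have DV: "Dj 0 V = - (V * Dj 0 F)"
    unfolding V_def using Dj_subst[OF gmF Dj_hs, of Ep] by (simp add: DEp hs_0)
  have dF: "Dj 0 F = V - X * V * Dj 0 F"
    by (subst FXV) (simp add: Dj_mult Dj_X DV algebra_simps)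
  have key: "X * Dj 0 F + Dj 0 (subst (hs F) C) = 1"
  proof -
    have "X * Dj 0 F + Dj 0 (subst (hs F) C) = X * Dj 0 F + U * Dj 0 F"
      by (simp add: sC DU)
    also have "\<dots> = (X * Dj 0 F + U * Dj 0 F) * (U * V)" using UV by simp
    also have "\<dots> = U * (Dj 0 F + X * V * Dj 0 F) + (U * V - 1) * (U * Dj 0 F)"
      by (simp add: algebra_simps)
    also have "Dj 0 F + X * V * Dj 0 F = V" using dF unfolding eq_diff_eq .
    finally show ?thesis using UV by simp
  qed
  have susp: "sf_susp PreLie = coeff F"
    by (rule ext) (simp add: sf_susp_def F_def P_def coeff_Tw)
  have pl: "sf_pleth Comm (coeff F) = coeff (subst (hs F) C)"
    by (simp add: pleth_coeff coeff_inverse C_def)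
  show ?thesis
    unfolding susp pl sf_dp1_coeff
    using arg_cong[OF key, of coeff]
    by (simp add: times_ps.rep_eq plus_ps.rep_eq one_ps.rep_eq X.rep_eq)
qed


end
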